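(* Let $(G_i)_{i\in I}$ be a finite family of finite groups, $G=\prod_{i\in I}G_i$, $\pi_i\colon G\to G_i$ the projections, and $H\le G$ a subgroup. If $HM(G)=G$ and $\pi_i(H)=G_i$ for all $i\in I$, then $H=G$.
   Context: For a finite group $G$, $M(G)$ (the Melnikov subgroup) is the intersection of all maximal normal subgroups of $G$. *)

theory Defs
  imports "HOL-Algebra.Algebra"
begin

definition maximal_normal_subgroup :: "('a, 'b) monoid_scheme \<Rightarrow> 'a set \<Rightarrow> bool" where
  "maximal_normal_subgroup G N \<longleftrightarrow>
     normal N G \<and> N \<noteq> carrier G \<and>
     (\<forall>K. normal K G \<and> N \<subseteq> K \<longrightarrow> K = N \<or> K = carrier G)"

text \<open>Melnikov subgroup: intersection of all maximal normal subgroups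
  (the whole group if there are none).\<close>
definition melnikov :: "('a, 'b) monoid_scheme \<Rightarrow> 'a set" where
  "melnikov G = carrier G \<inter> \<Inter> {N. maximal_normal_subgroup G N}"

end

theory Submission
  imports Defs
begin

lemma exists_maximal_normal:
  assumes "group K" "finite (carrier K)" "normal N K" "N \<noteq> carrier K"
  shows "\<exists>M. maximal_normal_subgroup K M \<and> N \<subseteq> M"
proof -
  let ?S = "{Y. normal Y K \<and> Y \<noteq> carrier K \<and> N \<subseteq> Y}"
  have "?S \<subseteq> Pow (carrier K)" by (auto dest: normal_imp_subgroup subgroup.subset)
  hence fin: "finite ?S" using assms(2) finite_subset by blast
  have "N \<in> ?S" using assms by blast
  then obtain M where M: "M \<in> ?S" "\<forall>Y\<in>?S. M \<subseteq> Y \<longrightarrow> M = Y"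
    using finite_has_maximal2[OF fin \<open>N \<in> ?S\<close>] by auto
  have "maximal_normal_subgroup K M"
    unfolding maximal_normal_subgroup_def using M by blast
  thus ?thesis using M by blast
qed

lemma melC: "m \<in> melnikov K \<Longrightarrow> m \<in> carrier K" unfolding melnikov_def by blast
lemma melD: "m \<in> melnikov K \<Longrightarrow> maximal_normal_subgroup K N \<Longrightarrow> m \<in> N" unfolding melnikov_def by blast

locale msetup =
  fixes I :: "'i set" and Gs :: "'i \<Rightarrow> ('a, 'b) monoid_scheme" and H :: "('i \<Rightarrow> 'a) set"
  assumes grp: "\<And>i. i \<in> I \<Longrightarrow> group (Gs i)"
    and fin: "\<And>i. i \<in> I \<Longrightarrow> finite (carrier (Gs i))"
    and sub: "subgroup H (product_group I Gs)"
    and HM: "H <#>\<^bsub>product_group I Gs\<^esub> melnikov (product_group I Gs) = carrier (product_group I Gs)"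
    and surj: "\<And>i. i \<in> I \<Longrightarrow> (\<lambda>h. h i) ` H = carrier (Gs i)"
begin

abbreviation "G \<equiv> product_group I Gs"

lemma grpG: "group G" using grp by simp

lemma HG: "H \<subseteq> carrier G" using sub subgroup.subset by blast

lemma cmul: "f \<in> carrier G \<Longrightarrow> g \<in> carrier G \<Longrightarrow> i \<in> I \<Longrightarrow> (f \<otimes>\<^bsub>G\<^esub> g) i = f i \<otimes>\<^bsub>Gs i\<^esub> g i"
  by simp
lemma cinv: "f \<in> carrier G \<Longrightarrow> i \<in> I \<Longrightarrow> (inv\<^bsub>G\<^esub> f) i = inv\<^bsub>Gs i\<^esub> (f i)"
  using grp by simp
lemma cone: "i \<in> I \<Longrightarrow> \<one>\<^bsub>G\<^esub> i = \<one>\<^bsub>Gs i\<^esub>"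
  by simp
lemma ccar: "f \<in> carrier G \<Longrightarrow> i \<in> I \<Longrightarrow> f i \<in> carrier (Gs i)"
  by auto

declare carrier_product_group[simp del] mult_product_group[simp del] inv_product_group[simp del] one_product_group[simp del]

lemma cconj: "x \<in> carrier G \<Longrightarrow> g \<in> carrier G \<Longrightarrow> i \<in> I \<Longrightarrow>
   (x \<otimes>\<^bsub>G\<^esub> g \<otimes>\<^bsub>G\<^esub> inv\<^bsub>G\<^esub> x) i = x i \<otimes>\<^bsub>Gs i\<^esub> g i \<otimes>\<^bsub>Gs i\<^esub> inv\<^bsub>Gs i\<^esub> (x i)"
proof -
  assume a: "x \<in> carrier G" "g \<in> carrier G" "i \<in> I"
  interpret G: group G by (rule grpG)
  have "(x \<otimes>\<^bsub>G\<^esub> g \<otimes>\<^bsub>G\<^esub> inv\<^bsub>G\<^esub> x) i = (x \<otimes>\<^bsub>G\<^esub> g) i \<otimes>\<^bsub>Gs i\<^esub> (inv\<^bsub>G\<^esub> x) i"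
    using a by (intro cmul) (auto intro: G.m_closed G.inv_closed)
  thus ?thesis using a cmul cinv by simp
qed

lemma cmulinv: "x \<in> carrier G \<Longrightarrow> g \<in> carrier G \<Longrightarrow> i \<in> I \<Longrightarrow>
   (x \<otimes>\<^bsub>G\<^esub> inv\<^bsub>G\<^esub> g) i = x i \<otimes>\<^bsub>Gs i\<^esub> inv\<^bsub>Gs i\<^esub> (g i)"
proof -
  assume a: "x \<in> carrier G" "g \<in> carrier G" "i \<in> I"
  interpret G: group G by (rule grpG)
  have "(x \<otimes>\<^bsub>G\<^esub> inv\<^bsub>G\<^esub> g) i = x i \<otimes>\<^bsub>Gs i\<^esub> (inv\<^bsub>G\<^esub> g) i"
    using a by (intro cmul) (auto intro: G.m_closed G.inv_closed)
  thus ?thesis using a cinv by simp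
qed

lemma cinvmul: "x \<in> carrier G \<Longrightarrow> g \<in> carrier G \<Longrightarrow> i \<in> I \<Longrightarrow>
   (inv\<^bsub>G\<^esub> x \<otimes>\<^bsub>G\<^esub> g) i = inv\<^bsub>Gs i\<^esub> (x i) \<otimes>\<^bsub>Gs i\<^esub> g i"
proof -
  assume a: "x \<in> carrier G" "g \<in> carrier G" "i \<in> I"
  interpret G: group G by (rule grpG)
  have "(inv\<^bsub>G\<^esub> x \<otimes>\<^bsub>G\<^esub> g) i = (inv\<^bsub>G\<^esub> x) i \<otimes>\<^bsub>Gs i\<^esub> g i"
    using a by (intro cmul) (auto intro: G.m_closed G.inv_closed)
  thus ?thesis using a cinv by simp
qed

lemma lift: "i \<in> I \<Longrightarrow> x \<in> carrier (Gs i) \<Longrightarrow> \<exists>h\<in>H. h i = x"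
proof -
  assume "i \<in> I" "x \<in> carrier (Gs i)"
  hence "x \<in> (\<lambda>h. h i) ` H" using surj by simp
  thus ?thesis by auto
qed


lemma sub_coord:
  assumes "i \<in> I" "subgroup S (Gs i)" "g \<in> carrier G" "g i \<in> S" "x \<in> carrier G"
  shows "True" by simp

lemma N1_max:
  assumes j: "j \<in> I" and A': "maximal_normal_subgroup (Gs j) A'"
  shows "maximal_normal_subgroup G {g \<in> carrier G. g j \<in> A'}" (is "maximal_normal_subgroup G ?N")
proof -
  interpret G: group G by (rule grpG)
  interpret Gj: group "Gs j" using grp j by blast
  have nA: "normal A' (Gs j)" and pA: "A' \<noteq> carrier (Gs j)"
   and mA: "\<And>K. normal K (Gs j) \<Longrightarrow> A' \<subseteq> K \<Longrightarrow> K = A' \<or> K = carrier (Gs j)"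
    using A' unfolding maximal_normal_subgroup_def by blast+
  interpret A: subgroup A' "Gs j" using nA normal_imp_subgroup by blast
  have conjA: "\<And>x a. x \<in> carrier (Gs j) \<Longrightarrow> a \<in> A' \<Longrightarrow> x \<otimes>\<^bsub>Gs j\<^esub> a \<otimes>\<^bsub>Gs j\<^esub> inv\<^bsub>Gs j\<^esub> x \<in> A'"
    using Gj.normal_invE(2)[OF nA] by blast
  have subN: "subgroup ?N G"
  proof (rule G.subgroupI)
    show "?N \<subseteq> carrier G" by blast
    show "?N \<noteq> {}" using j G.one_closed cone A.one_closed by (auto intro!: exI[of _ "\<one>\<^bsub>G\<^esub>"])
    show "inv\<^bsub>G\<^esub> a \<in> ?N" if "a \<in> ?N" for a
    proof -
      have "a \<in> carrier G" using that by blast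
      thus ?thesis using that j cinv[of a j] G.inv_closed[of a] A.m_inv_closed by auto
    qed
    show "a \<otimes>\<^bsub>G\<^esub> b \<in> ?N" if "a \<in> ?N" "b \<in> ?N" for a b
      using that j G.m_closed[of a b] cmul[of a b j] A.m_closed by auto
  qed
  have nN: "normal ?N G"
    unfolding G.normal_inv_iff
  proof (intro conjI subN ballI)
    fix x h assume x: "x \<in> carrier G" and h: "h \<in> ?N"
    have "(x \<otimes>\<^bsub>G\<^esub> h \<otimes>\<^bsub>G\<^esub> inv\<^bsub>G\<^esub> x) j = x j \<otimes>\<^bsub>Gs j\<^esub> h j \<otimes>\<^bsub>Gs j\<^esub> inv\<^bsub>Gs j\<^esub> (x j)"
      using cconj[OF x _ j, of h] h by blast
    moreover have "x j \<in> carrier (Gs j)" using x j ccar by blast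
    moreover have "x \<otimes>\<^bsub>G\<^esub> h \<otimes>\<^bsub>G\<^esub> inv\<^bsub>G\<^esub> x \<in> carrier G"
      using x h by (blast intro: G.m_closed G.inv_closed)
    ultimately show "x \<otimes>\<^bsub>G\<^esub> h \<otimes>\<^bsub>G\<^esub> inv\<^bsub>G\<^esub> x \<in> ?N"
      using conjA h by (metis (no_types, lifting) mem_Collect_eq)
  qed
  obtain a0 where a0: "a0 \<in> carrier (Gs j)" "a0 \<notin> A'" using pA A.subset by blast
  obtain h0 where h0: "h0 \<in> H" "h0 j = a0" using lift[OF j a0(1)] by blast
  have pN: "?N \<noteq> carrier G" using h0 a0 HG by blast
  have mN: "K = ?N \<or> K = carrier G" if K: "normal K G" "?N \<subseteq> K" for K
  proof -
    have sK: "subgroup K G" using K(1) by (rule normal_imp_subgroup)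
    interpret K: subgroup K G by (rule sK)
    have Kc: "\<And>g. g \<in> K \<Longrightarrow> g \<in> carrier G" using K.subset by (rule subsetD)
    let ?K' = "(\<lambda>g. g j) ` K"
    have sK': "subgroup ?K' (Gs j)"
    proof (rule Gj.subgroupI)
      show "?K' \<subseteq> carrier (Gs j)"
      proof
        fix a assume "a \<in> ?K'"
        then obtain g where g: "a = g j" "g \<in> K" by (rule imageE)
        show "a \<in> carrier (Gs j)" unfolding g(1) by (rule ccar[OF Kc[OF g(2)] j])
      qed
      have "\<one>\<^bsub>G\<^esub> j \<in> ?K'" by (rule imageI) (rule K.one_closed)
      thus "?K' \<noteq> {}" by (metis empty_iff)
      show "inv\<^bsub>Gs j\<^esub> a \<in> ?K'" if "a \<in> ?K'" for a
      proof -
        from that obtain g where g: "a = g j" "g \<in> K" by (rule imageE)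
        have eq: "(inv\<^bsub>G\<^esub> g) j = inv\<^bsub>Gs j\<^esub> a" using cinv[OF Kc[OF g(2)] j] g(1) by simp
        show ?thesis by (rule image_eqI) (rule sym[OF eq], rule K.m_inv_closed[OF g(2)])
      qed
      show "a \<otimes>\<^bsub>Gs j\<^esub> b \<in> ?K'" if "a \<in> ?K'" "b \<in> ?K'" for a b
      proof -
        from that(1) obtain g where g: "a = g j" "g \<in> K" by (rule imageE)
        from that(2) obtain g' where g': "b = g' j" "g' \<in> K" by (rule imageE)
        have eq: "(g \<otimes>\<^bsub>G\<^esub> g') j = a \<otimes>\<^bsub>Gs j\<^esub> b" using cmul[OF Kc[OF g(2)] Kc[OF g'(2)] j] g(1) g'(1) by simp
        show ?thesis by (rule image_eqI) (rule sym[OF eq], rule K.m_closed[OF g(2) g'(2)])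
      qed
    qed
    have nK': "normal ?K' (Gs j)"
      unfolding Gj.normal_inv_iff
    proof (intro conjI sK' ballI)
      fix x a assume x: "x \<in> carrier (Gs j)" and a: "a \<in> ?K'"
      from a obtain g where g: "a = g j" "g \<in> K" by (rule imageE)
      obtain hx where hx: "hx \<in> H" "hx j = x" using lift[OF j x] by blast
      have hxc: "hx \<in> carrier G" using HG hx(1) by (rule subsetD)
      have m: "hx \<otimes>\<^bsub>G\<^esub> g \<otimes>\<^bsub>G\<^esub> inv\<^bsub>G\<^esub> hx \<in> K"
        using G.normal_invE(2)[OF K(1) hxc g(2)] .
      have eq: "(hx \<otimes>\<^bsub>G\<^esub> g \<otimes>\<^bsub>G\<^esub> inv\<^bsub>G\<^esub> hx) j = x \<otimes>\<^bsub>Gs j\<^esub> a \<otimes>\<^bsub>Gs j\<^esub> inv\<^bsub>Gs j\<^esub> x"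
        using cconj[OF hxc Kc[OF g(2)] j] g(1) hx(2) by simp
      show "x \<otimes>\<^bsub>Gs j\<^esub> a \<otimes>\<^bsub>Gs j\<^esub> inv\<^bsub>Gs j\<^esub> x \<in> ?K'" by (rule image_eqI) (rule sym[OF eq], rule m)
    qed
    have AK: "A' \<subseteq> ?K'"
    proof
      fix a assume a: "a \<in> A'"
      have ac: "a \<in> carrier (Gs j)" using A.subset a by (rule subsetD)
      obtain h where h: "h \<in> H" "h j = a" using lift[OF j ac] by blast
      have hc: "h \<in> carrier G" using HG h(1) by (rule subsetD)
      have "h \<in> ?N" using hc h(2) a by simp
      hence hK: "h \<in> K" by (rule subsetD[OF K(2)])
      show "a \<in> ?K'" by (rule image_eqI) (rule sym[OF h(2)], rule hK)
    qed
    from mA[OF nK' AK] show ?thesis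
    proof
      assume e: "?K' = A'"
      have "K \<subseteq> ?N"
      proof
        fix g assume g: "g \<in> K"
        have "g j \<in> ?K'" using g by (rule imageI)
        thus "g \<in> ?N" using e Kc[OF g] by simp
      qed
      thus ?thesis using K(2) by (rule equalityI[THEN disjI1])
    next
      assume e: "?K' = carrier (Gs j)"
      have "carrier G \<subseteq> K"
      proof
        fix g assume g: "g \<in> carrier G"
        have "g j \<in> ?K'" using e ccar[OF g j] by simp
        then obtain k where k: "g j = k j" "k \<in> K" by (rule imageE)
        have kc: "k \<in> carrier G" using Kc[OF k(2)] .
        have "(g \<otimes>\<^bsub>G\<^esub> inv\<^bsub>G\<^esub> k) j = \<one>\<^bsub>Gs j\<^esub>"
          using cmulinv[OF g kc j] k(1) Gj.r_inv ccar[OF kc j] by simp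
        moreover have "g \<otimes>\<^bsub>G\<^esub> inv\<^bsub>G\<^esub> k \<in> carrier G" using g kc by (intro G.m_closed G.inv_closed)
        ultimately have "g \<otimes>\<^bsub>G\<^esub> inv\<^bsub>G\<^esub> k \<in> ?N" using A.one_closed by simp
        hence "g \<otimes>\<^bsub>G\<^esub> inv\<^bsub>G\<^esub> k \<in> K" by (rule subsetD[OF K(2)])
        hence "g \<otimes>\<^bsub>G\<^esub> inv\<^bsub>G\<^esub> k \<otimes>\<^bsub>G\<^esub> k \<in> K" using k(2) by (rule K.m_closed)
        moreover have "g \<otimes>\<^bsub>G\<^esub> inv\<^bsub>G\<^esub> k \<otimes>\<^bsub>G\<^esub> k = g" using g kc by (simp add: G.m_assoc)
        ultimately show "g \<in> K" by simp
      qed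
      hence "K = carrier G" using K.subset by (rule equalityI[rotated])
      thus ?thesis by (rule disjI2)
    qed
  qed
  show ?thesis unfolding maximal_normal_subgroup_def using nN pN mN by blast
qed


lemma N2_max:
  assumes JI: "J \<subseteq> I" and j: "j \<in> I"
    and PJ: "\<forall>f\<in>carrier G. \<exists>h\<in>H. \<forall>k\<in>J. h k = f k"
    and A': "maximal_normal_subgroup (Gs j) A'"
    and AA: "\<And>h. h \<in> H \<Longrightarrow> \<forall>k\<in>J. h k = \<one>\<^bsub>Gs k\<^esub> \<Longrightarrow> h j \<in> A'"
  shows "maximal_normal_subgroup G {g \<in> carrier G. \<exists>h\<in>H. (\<forall>k\<in>J. h k = g k) \<and> h j \<in> A'}"
    (is "maximal_normal_subgroup G ?N")
proof -
  interpret G: group G by (rule grpG)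
  interpret Gj: group "Gs j" using grp j by blast
  interpret Hs: subgroup H G by (rule sub)
  have Hc: "\<And>h. h \<in> H \<Longrightarrow> h \<in> carrier G" using HG by (rule subsetD)
  have kI: "\<And>k. k \<in> J \<Longrightarrow> k \<in> I" using JI by (rule subsetD)
  have nA: "normal A' (Gs j)" and pA: "A' \<noteq> carrier (Gs j)"
   and mA: "\<And>K. normal K (Gs j) \<Longrightarrow> A' \<subseteq> K \<Longrightarrow> K = A' \<or> K = carrier (Gs j)"
    using A' unfolding maximal_normal_subgroup_def by blast+
  interpret A: subgroup A' "Gs j" using nA by (rule normal_imp_subgroup)
  have Ac: "\<And>a. a \<in> A' \<Longrightarrow> a \<in> carrier (Gs j)" using A.subset by (rule subsetD)
  have conjA: "\<And>x a. x \<in> carrier (Gs j) \<Longrightarrow> a \<in> A' \<Longrightarrow> x \<otimes>\<^bsub>Gs j\<^esub> a \<otimes>\<^bsub>Gs j\<^esub> inv\<^bsub>Gs j\<^esub> x \<in> A'"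
    using Gj.normal_invE(2)[OF nA] by blast
  have memN: "g \<in> ?N" if "h \<in> H" "g \<in> carrier G" "\<forall>k\<in>J. h k = g k" "h j \<in> A'" for g h
    using that by blast
  have L: "g \<in> ?N" if g: "g \<in> carrier G" and g1: "\<forall>k\<in>J. g k = \<one>\<^bsub>Gs k\<^esub>" for g
  proof (rule memN[OF Hs.one_closed g])
    show "\<forall>k\<in>J. \<one>\<^bsub>G\<^esub> k = g k" using g1 cone kI by simp
    show "\<one>\<^bsub>G\<^esub> j \<in> A'" using cone[OF j] A.one_closed by simp
  qed
  have subN: "subgroup ?N G"
  proof (rule G.subgroupI)
    show "?N \<subseteq> carrier G" by blast
    have "\<one>\<^bsub>G\<^esub> \<in> ?N" by (rule L) (use cone kI in auto)
    thus "?N \<noteq> {}" by (metis empty_iff)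
    show "inv\<^bsub>G\<^esub> a \<in> ?N" if "a \<in> ?N" for a
    proof -
      from that obtain h where h: "h \<in> H" "a \<in> carrier G" "\<forall>k\<in>J. h k = a k" "h j \<in> A'" by blast
      show ?thesis
      proof (rule memN[OF Hs.m_inv_closed[OF h(1)] G.inv_closed[OF h(2)]])
        show "\<forall>k\<in>J. (inv\<^bsub>G\<^esub> h) k = (inv\<^bsub>G\<^esub> a) k"
          using h(3) cinv[OF Hc[OF h(1)]] cinv[OF h(2)] kI by simp
        show "(inv\<^bsub>G\<^esub> h) j \<in> A'" using cinv[OF Hc[OF h(1)] j] A.m_inv_closed[OF h(4)] by simp
      qed
    qed
    show "a \<otimes>\<^bsub>G\<^esub> b \<in> ?N" if "a \<in> ?N" "b \<in> ?N" for a b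
    proof -
      from that(1) obtain h where h: "h \<in> H" "a \<in> carrier G" "\<forall>k\<in>J. h k = a k" "h j \<in> A'" by blast
      from that(2) obtain h' where h': "h' \<in> H" "b \<in> carrier G" "\<forall>k\<in>J. h' k = b k" "h' j \<in> A'" by blast
      show ?thesis
      proof (rule memN[OF Hs.m_closed[OF h(1) h'(1)] G.m_closed[OF h(2) h'(2)]])
        show "\<forall>k\<in>J. (h \<otimes>\<^bsub>G\<^esub> h') k = (a \<otimes>\<^bsub>G\<^esub> b) k"
          using h(3) h'(3) cmul[OF Hc[OF h(1)] Hc[OF h'(1)]] cmul[OF h(2) h'(2)] kI by simp
        show "(h \<otimes>\<^bsub>G\<^esub> h') j \<in> A'" using cmul[OF Hc[OF h(1)] Hc[OF h'(1)] j] A.m_closed[OF h(4) h'(4)] by simp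
      qed
    qed
  qed
  have nN: "normal ?N G"
    unfolding G.normal_inv_iff
  proof (intro conjI subN ballI)
    fix x g assume x: "x \<in> carrier G" and g: "g \<in> ?N"
    from g obtain h where h: "h \<in> H" "g \<in> carrier G" "\<forall>k\<in>J. h k = g k" "h j \<in> A'" by blast
    from PJ x obtain hx where hx: "hx \<in> H" "\<forall>k\<in>J. hx k = x k" by blast
    have hxc: "hx \<in> carrier G" by (rule Hc[OF hx(1)])
    have hc: "h \<in> carrier G" by (rule Hc[OF h(1)])
    show "x \<otimes>\<^bsub>G\<^esub> g \<otimes>\<^bsub>G\<^esub> inv\<^bsub>G\<^esub> x \<in> ?N"
    proof (rule memN)
      show "hx \<otimes>\<^bsub>G\<^esub> h \<otimes>\<^bsub>G\<^esub> inv\<^bsub>G\<^esub> hx \<in> H"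
        using hx(1) h(1) by (intro Hs.m_closed Hs.m_inv_closed)
      show "x \<otimes>\<^bsub>G\<^esub> g \<otimes>\<^bsub>G\<^esub> inv\<^bsub>G\<^esub> x \<in> carrier G"
        using x h(2) by (intro G.m_closed G.inv_closed)
      show "\<forall>k\<in>J. (hx \<otimes>\<^bsub>G\<^esub> h \<otimes>\<^bsub>G\<^esub> inv\<^bsub>G\<^esub> hx) k = (x \<otimes>\<^bsub>G\<^esub> g \<otimes>\<^bsub>G\<^esub> inv\<^bsub>G\<^esub> x) k"
        using cconj[OF hxc hc] cconj[OF x h(2)] hx(2) h(3) kI by simp
      show "(hx \<otimes>\<^bsub>G\<^esub> h \<otimes>\<^bsub>G\<^esub> inv\<^bsub>G\<^esub> hx) j \<in> A'"
        using cconj[OF hxc hc j] conjA[OF ccar[OF hxc j] h(4)] by simp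
    qed
  qed
  obtain a0 where a0: "a0 \<in> carrier (Gs j)" "a0 \<notin> A'" using pA A.subset by blast
  obtain h0 where h0: "h0 \<in> H" "h0 j = a0" using lift[OF j a0(1)] by blast
  have pN: "?N \<noteq> carrier G"
  proof
    assume e: "?N = carrier G"
    have "h0 \<in> ?N" using e Hc[OF h0(1)] by simp
    then obtain h where h: "h \<in> H" "\<forall>k\<in>J. h k = h0 k" "h j \<in> A'" by blast
    have hc: "h \<in> carrier G" by (rule Hc[OF h(1)])
    have h0c: "h0 \<in> carrier G" by (rule Hc[OF h0(1)])
    have vH: "inv\<^bsub>G\<^esub> h \<otimes>\<^bsub>G\<^esub> h0 \<in> H" using h(1) h0(1) by (intro Hs.m_closed Hs.m_inv_closed)
    have "\<forall>k\<in>J. (inv\<^bsub>G\<^esub> h \<otimes>\<^bsub>G\<^esub> h0) k = \<one>\<^bsub>Gs k\<^esub>"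
    proof
      fix k assume k: "k \<in> J"
      interpret Gk: group "Gs k" using grp kI[OF k] by blast
      show "(inv\<^bsub>G\<^esub> h \<otimes>\<^bsub>G\<^esub> h0) k = \<one>\<^bsub>Gs k\<^esub>"
        using cinvmul[OF hc h0c kI[OF k]] h(2) k ccar[OF h0c kI[OF k]] by simp
    qed
    hence "(inv\<^bsub>G\<^esub> h \<otimes>\<^bsub>G\<^esub> h0) j \<in> A'" by (rule AA[OF vH])
    hence v: "inv\<^bsub>Gs j\<^esub> (h j) \<otimes>\<^bsub>Gs j\<^esub> a0 \<in> A'" using cinvmul[OF hc h0c j] h0(2) by simp
    have "h j \<otimes>\<^bsub>Gs j\<^esub> (inv\<^bsub>Gs j\<^esub> (h j) \<otimes>\<^bsub>Gs j\<^esub> a0) \<in> A'" by (rule A.m_closed[OF h(3) v])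
    moreover have "h j \<otimes>\<^bsub>Gs j\<^esub> (inv\<^bsub>Gs j\<^esub> (h j) \<otimes>\<^bsub>Gs j\<^esub> a0) = a0"
      using Ac[OF h(3)] a0(1) by (simp add: Gj.m_assoc[symmetric])
    ultimately show False using a0(2) by simp
  qed
  have S: "\<exists>h\<in>H. (\<forall>k\<in>J. h k = g k) \<and> g \<otimes>\<^bsub>G\<^esub> inv\<^bsub>G\<^esub> h \<in> ?N" if g: "g \<in> carrier G" for g
  proof -
    from PJ g obtain h where h: "h \<in> H" "\<forall>k\<in>J. h k = g k" by blast
    have hc: "h \<in> carrier G" by (rule Hc[OF h(1)])
    have "g \<otimes>\<^bsub>G\<^esub> inv\<^bsub>G\<^esub> h \<in> ?N"
    proof (rule L)
      show "g \<otimes>\<^bsub>G\<^esub> inv\<^bsub>G\<^esub> h \<in> carrier G" using g hc by (intro G.m_closed G.inv_closed)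
      show "\<forall>k\<in>J. (g \<otimes>\<^bsub>G\<^esub> inv\<^bsub>G\<^esub> h) k = \<one>\<^bsub>Gs k\<^esub>"
      proof
        fix k assume k: "k \<in> J"
        interpret Gk: group "Gs k" using grp kI[OF k] by blast
        show "(g \<otimes>\<^bsub>G\<^esub> inv\<^bsub>G\<^esub> h) k = \<one>\<^bsub>Gs k\<^esub>"
          using cmulinv[OF g hc kI[OF k]] h(2) k ccar[OF g kI[OF k]] by simp
      qed
    qed
    thus ?thesis using h by blast
  qed
  have mN: "K = ?N \<or> K = carrier G" if K: "normal K G" "?N \<subseteq> K" for K
  proof -
    have sK: "subgroup K G" using K(1) by (rule normal_imp_subgroup)
    interpret K: subgroup K G by (rule sK)
    have Kc: "\<And>g. g \<in> K \<Longrightarrow> g \<in> carrier G" using K.subset by (rule subsetD)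
    have NK: "\<And>g. g \<in> ?N \<Longrightarrow> g \<in> K" by (rule subsetD[OF K(2)])
    let ?K' = "(\<lambda>g. g j) ` (H \<inter> K)"
    have sK': "subgroup ?K' (Gs j)"
    proof (rule Gj.subgroupI)
      show "?K' \<subseteq> carrier (Gs j)"
      proof
        fix a assume "a \<in> ?K'"
        then obtain g where g: "a = g j" "g \<in> H \<inter> K" by (rule imageE)
        have "g \<in> K" using g(2) by (rule IntD2)
        show "a \<in> carrier (Gs j)" unfolding g(1) by (rule ccar[OF Kc[OF \<open>g \<in> K\<close>] j])
      qed
      have "\<one>\<^bsub>G\<^esub> \<in> H \<inter> K" using Hs.one_closed K.one_closed by (rule IntI)
      hence "\<one>\<^bsub>G\<^esub> j \<in> ?K'" by (rule imageI)
      thus "?K' \<noteq> {}" by (metis empty_iff)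
      show "inv\<^bsub>Gs j\<^esub> a \<in> ?K'" if "a \<in> ?K'" for a
      proof -
        from that obtain g where g: "a = g j" "g \<in> H \<inter> K" by (rule imageE)
        have gH: "g \<in> H" and gK: "g \<in> K" using g(2) by auto
        have eq: "(inv\<^bsub>G\<^esub> g) j = inv\<^bsub>Gs j\<^esub> a" using cinv[OF Kc[OF gK] j] g(1) by simp
        have "inv\<^bsub>G\<^esub> g \<in> H \<inter> K" using Hs.m_inv_closed[OF gH] K.m_inv_closed[OF gK] by (rule IntI)
        show ?thesis by (rule image_eqI) (rule sym[OF eq], fact)
      qed
      show "a \<otimes>\<^bsub>Gs j\<^esub> b \<in> ?K'" if "a \<in> ?K'" "b \<in> ?K'" for a b
      proof -
        from that(1) obtain g where g: "a = g j" "g \<in> H \<inter> K" by (rule imageE)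
        from that(2) obtain g' where g': "b = g' j" "g' \<in> H \<inter> K" by (rule imageE)
        have gH: "g \<in> H" and gK: "g \<in> K" using g(2) by auto
        have gH': "g' \<in> H" and gK': "g' \<in> K" using g'(2) by auto
        have eq: "(g \<otimes>\<^bsub>G\<^esub> g') j = a \<otimes>\<^bsub>Gs j\<^esub> b" using cmul[OF Kc[OF gK] Kc[OF gK'] j] g(1) g'(1) by simp
        have "g \<otimes>\<^bsub>G\<^esub> g' \<in> H \<inter> K" using Hs.m_closed[OF gH gH'] K.m_closed[OF gK gK'] by (rule IntI)
        show ?thesis by (rule image_eqI) (rule sym[OF eq], fact)
      qed
    qed
    have nK': "normal ?K' (Gs j)"
      unfolding Gj.normal_inv_iff
    proof (intro conjI sK' ballI)
      fix x a assume x: "x \<in> carrier (Gs j)" and a: "a \<in> ?K'"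
      from a obtain g where g: "a = g j" "g \<in> H \<inter> K" by (rule imageE)
      have gH: "g \<in> H" and gK: "g \<in> K" using g(2) by auto
      obtain hx where hx: "hx \<in> H" "hx j = x" using lift[OF j x] by blast
      have hxc: "hx \<in> carrier G" by (rule Hc[OF hx(1)])
      have m1: "hx \<otimes>\<^bsub>G\<^esub> g \<otimes>\<^bsub>G\<^esub> inv\<^bsub>G\<^esub> hx \<in> K"
        using G.normal_invE(2)[OF K(1) hxc gK] .
      have m2: "hx \<otimes>\<^bsub>G\<^esub> g \<otimes>\<^bsub>G\<^esub> inv\<^bsub>G\<^esub> hx \<in> H"
        using hx(1) gH by (intro Hs.m_closed Hs.m_inv_closed)
      have m: "hx \<otimes>\<^bsub>G\<^esub> g \<otimes>\<^bsub>G\<^esub> inv\<^bsub>G\<^esub> hx \<in> H \<inter> K" using m2 m1 by (rule IntI)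
      have eq: "(hx \<otimes>\<^bsub>G\<^esub> g \<otimes>\<^bsub>G\<^esub> inv\<^bsub>G\<^esub> hx) j = x \<otimes>\<^bsub>Gs j\<^esub> a \<otimes>\<^bsub>Gs j\<^esub> inv\<^bsub>Gs j\<^esub> x"
        using cconj[OF hxc Kc[OF gK] j] g(1) hx(2) by simp
      show "x \<otimes>\<^bsub>Gs j\<^esub> a \<otimes>\<^bsub>Gs j\<^esub> inv\<^bsub>Gs j\<^esub> x \<in> ?K'" by (rule image_eqI) (rule sym[OF eq], rule m)
    qed
    have AK: "A' \<subseteq> ?K'"
    proof
      fix a assume a: "a \<in> A'"
      obtain h where h: "h \<in> H" "h j = a" using lift[OF j Ac[OF a]] by blast
      have "h \<in> ?N" by (rule memN[OF h(1) Hc[OF h(1)]]) (use h a in auto)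
      hence hK: "h \<in> K" by (rule NK)
      have "h \<in> H \<inter> K" using h(1) hK by (rule IntI)
      show "a \<in> ?K'" by (rule image_eqI) (rule sym[OF h(2)], fact)
    qed
    from mA[OF nK' AK] show ?thesis
    proof
      assume e: "?K' = A'"
      have "K \<subseteq> ?N"
      proof
        fix g assume g: "g \<in> K"
        have gc: "g \<in> carrier G" by (rule Kc[OF g])
        from S[OF gc] obtain h where h: "h \<in> H" "\<forall>k\<in>J. h k = g k" "g \<otimes>\<^bsub>G\<^esub> inv\<^bsub>G\<^esub> h \<in> ?N" by blast
        have hc: "h \<in> carrier G" by (rule Hc[OF h(1)])
        have "g \<otimes>\<^bsub>G\<^esub> inv\<^bsub>G\<^esub> h \<in> K" by (rule NK[OF h(3)])
        hence "inv\<^bsub>G\<^esub> (g \<otimes>\<^bsub>G\<^esub> inv\<^bsub>G\<^esub> h) \<in> K" by (rule K.m_inv_closed)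
        hence "inv\<^bsub>G\<^esub> (g \<otimes>\<^bsub>G\<^esub> inv\<^bsub>G\<^esub> h) \<otimes>\<^bsub>G\<^esub> g \<in> K" using g by (rule K.m_closed)
        moreover have "inv\<^bsub>G\<^esub> (g \<otimes>\<^bsub>G\<^esub> inv\<^bsub>G\<^esub> h) \<otimes>\<^bsub>G\<^esub> g = h"
          using gc hc by (simp add: G.inv_mult_group G.m_assoc)
        ultimately have hK: "h \<in> K" by simp
        have "h \<in> H \<inter> K" using h(1) hK by (rule IntI)
        hence "h j \<in> ?K'" by (rule imageI)
        hence "h j \<in> A'" using e by simp
        thus "g \<in> ?N" using memN[OF h(1) gc h(2)] by simp
      qed
      thus ?thesis using K(2) by (rule equalityI[THEN disjI1])
    next
      assume e: "?K' = carrier (Gs j)"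
      have "carrier G \<subseteq> K"
      proof
        fix g assume gc: "g \<in> carrier G"
        from S[OF gc] obtain h where h: "h \<in> H" "\<forall>k\<in>J. h k = g k" "g \<otimes>\<^bsub>G\<^esub> inv\<^bsub>G\<^esub> h \<in> ?N" by blast
        have hc: "h \<in> carrier G" by (rule Hc[OF h(1)])
        have "h j \<in> ?K'" using e ccar[OF hc j] by simp
        then obtain h' where h': "h j = h' j" "h' \<in> H \<inter> K" by (rule imageE)
        have h'H: "h' \<in> H" and h'K: "h' \<in> K" using h'(2) by auto
        have h'c: "h' \<in> carrier G" by (rule Hc[OF h'H])
        have wH: "h \<otimes>\<^bsub>G\<^esub> inv\<^bsub>G\<^esub> h' \<in> H" using h(1) h'H by (intro Hs.m_closed Hs.m_inv_closed)
        have "(h \<otimes>\<^bsub>G\<^esub> inv\<^bsub>G\<^esub> h') j = \<one>\<^bsub>Gs j\<^esub>"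
          using cmulinv[OF hc h'c j] h'(1) Gj.r_inv ccar[OF h'c j] by simp
        hence "h \<otimes>\<^bsub>G\<^esub> inv\<^bsub>G\<^esub> h' \<in> ?N" using memN[OF wH Hc[OF wH]] A.one_closed by simp
        hence "h \<otimes>\<^bsub>G\<^esub> inv\<^bsub>G\<^esub> h' \<in> K" by (rule NK)
        hence "h \<otimes>\<^bsub>G\<^esub> inv\<^bsub>G\<^esub> h' \<otimes>\<^bsub>G\<^esub> h' \<in> K" using h'K by (rule K.m_closed)
        moreover have "h \<otimes>\<^bsub>G\<^esub> inv\<^bsub>G\<^esub> h' \<otimes>\<^bsub>G\<^esub> h' = h" using hc h'c by (simp add: G.m_assoc)
        ultimately have hK: "h \<in> K" by simp
        have "g \<otimes>\<^bsub>G\<^esub> inv\<^bsub>G\<^esub> h \<in> K" by (rule NK[OF h(3)])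
        hence "g \<otimes>\<^bsub>G\<^esub> inv\<^bsub>G\<^esub> h \<otimes>\<^bsub>G\<^esub> h \<in> K" using hK by (rule K.m_closed)
        moreover have "g \<otimes>\<^bsub>G\<^esub> inv\<^bsub>G\<^esub> h \<otimes>\<^bsub>G\<^esub> h = g" using gc hc by (simp add: G.m_assoc)
        ultimately show "g \<in> K" by simp
      qed
      hence "K = carrier G" using K.subset by (rule equalityI[rotated])
      thus ?thesis by (rule disjI2)
    qed
  qed
  show ?thesis unfolding maximal_normal_subgroup_def using nN pN mN by blast
qed


lemma step:
  assumes JI: "J \<subseteq> I" and j: "j \<in> I" and jJ: "j \<notin> J"
    and PJ: "\<forall>f\<in>carrier G. \<exists>h\<in>H. \<forall>k\<in>J. h k = f k"
  shows "\<forall>f\<in>carrier G. \<exists>h\<in>H. \<forall>k\<in>insert j J. h k = f k"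
proof -
  interpret G: group G by (rule grpG)
  interpret Gj: group "Gs j" using grp j by blast
  interpret Hs: subgroup H G by (rule sub)
  have Hc: "\<And>h. h \<in> H \<Longrightarrow> h \<in> carrier G" using HG by (rule subsetD)
  have kI: "\<And>k. k \<in> J \<Longrightarrow> k \<in> I" using JI by (rule subsetD)
  have Afull: "\<forall>c\<in>carrier (Gs j). \<exists>h\<in>H. (\<forall>k\<in>J. h k = \<one>\<^bsub>Gs k\<^esub>) \<and> h j = c"
  proof (rule ccontr)
    define A where "A = {h j |h. h \<in> H \<and> (\<forall>k\<in>J. h k = \<one>\<^bsub>Gs k\<^esub>)}"
    assume nf: "\<not> (\<forall>c\<in>carrier (Gs j). \<exists>h\<in>H. (\<forall>k\<in>J. h k = \<one>\<^bsub>Gs k\<^esub>) \<and> h j = c)"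
    have pA: "A \<noteq> carrier (Gs j)"
    proof
      assume e: "A = carrier (Gs j)"
      have "\<forall>c\<in>carrier (Gs j). \<exists>h\<in>H. (\<forall>k\<in>J. h k = \<one>\<^bsub>Gs k\<^esub>) \<and> h j = c"
      proof
        fix c assume "c \<in> carrier (Gs j)"
        hence "c \<in> A" using e by simp
        then obtain h where "c = h j" "h \<in> H" "\<forall>k\<in>J. h k = \<one>\<^bsub>Gs k\<^esub>" unfolding A_def by blast
        thus "\<exists>h\<in>H. (\<forall>k\<in>J. h k = \<one>\<^bsub>Gs k\<^esub>) \<and> h j = c" by blast
      qed
      thus False using nf by contradiction
    qed
    have Ain: "h j \<in> A" if "h \<in> H" "\<forall>k\<in>J. h k = \<one>\<^bsub>Gs k\<^esub>" for h
      unfolding A_def using that by blast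
    have Aone: "\<forall>k\<in>J. (inv\<^bsub>G\<^esub> h) k = \<one>\<^bsub>Gs k\<^esub>" if "h \<in> H" "\<forall>k\<in>J. h k = \<one>\<^bsub>Gs k\<^esub>" for h
    proof
      fix k assume k: "k \<in> J"
      interpret Gk: group "Gs k" using grp kI[OF k] by blast
      show "(inv\<^bsub>G\<^esub> h) k = \<one>\<^bsub>Gs k\<^esub>" using cinv[OF Hc[OF that(1)] kI[OF k]] that(2) k by simp
    qed
    have Amul: "\<forall>k\<in>J. (h \<otimes>\<^bsub>G\<^esub> h') k = \<one>\<^bsub>Gs k\<^esub>" if "h \<in> H" "\<forall>k\<in>J. h k = \<one>\<^bsub>Gs k\<^esub>"
       "h' \<in> H" "\<forall>k\<in>J. h' k = \<one>\<^bsub>Gs k\<^esub>" for h h'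
    proof
      fix k assume k: "k \<in> J"
      interpret Gk: group "Gs k" using grp kI[OF k] by blast
      show "(h \<otimes>\<^bsub>G\<^esub> h') k = \<one>\<^bsub>Gs k\<^esub>" using cmul[OF Hc[OF that(1)] Hc[OF that(3)] kI[OF k]] that(2,4) k by simp
    qed
    have subA: "subgroup A (Gs j)"
    proof (rule Gj.subgroupI)
      show "A \<subseteq> carrier (Gs j)"
      proof
        fix a assume "a \<in> A"
        then obtain h where h: "a = h j" "h \<in> H" unfolding A_def by blast
        show "a \<in> carrier (Gs j)" unfolding h(1) by (rule ccar[OF Hc[OF h(2)] j])
      qed
      have "\<one>\<^bsub>G\<^esub> j \<in> A" unfolding A_def using Hs.one_closed cone kI by auto
      thus "A \<noteq> {}" by (metis empty_iff)
      show "inv\<^bsub>Gs j\<^esub> a \<in> A" if "a \<in> A" for a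
      proof -
        from that obtain h where h: "a = h j" "h \<in> H" "\<forall>k\<in>J. h k = \<one>\<^bsub>Gs k\<^esub>" unfolding A_def by blast
        have "(inv\<^bsub>G\<^esub> h) j = inv\<^bsub>Gs j\<^esub> a" using cinv[OF Hc[OF h(2)] j] h(1) by simp
        thus ?thesis using Ain[OF Hs.m_inv_closed[OF h(2)] Aone[OF h(2,3)]] by simp
      qed
      show "a \<otimes>\<^bsub>Gs j\<^esub> b \<in> A" if "a \<in> A" "b \<in> A" for a b
      proof -
        from that(1) obtain h where h: "a = h j" "h \<in> H" "\<forall>k\<in>J. h k = \<one>\<^bsub>Gs k\<^esub>" unfolding A_def by blast
        from that(2) obtain h' where h': "b = h' j" "h' \<in> H" "\<forall>k\<in>J. h' k = \<one>\<^bsub>Gs k\<^esub>" unfolding A_def by blast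
        have "(h \<otimes>\<^bsub>G\<^esub> h') j = a \<otimes>\<^bsub>Gs j\<^esub> b" using cmul[OF Hc[OF h(2)] Hc[OF h'(2)] j] h(1) h'(1) by simp
        thus ?thesis using Ain[OF Hs.m_closed[OF h(2) h'(2)] Amul[OF h(2,3) h'(2,3)]] by simp
      qed
    qed
    have nA: "normal A (Gs j)"
      unfolding Gj.normal_inv_iff
    proof (intro conjI subA ballI)
      fix x a assume x: "x \<in> carrier (Gs j)" and a: "a \<in> A"
      from a obtain h where h: "a = h j" "h \<in> H" "\<forall>k\<in>J. h k = \<one>\<^bsub>Gs k\<^esub>" unfolding A_def by blast
      obtain hx where hx: "hx \<in> H" "hx j = x" using lift[OF j x] by blast
      have hxc: "hx \<in> carrier G" by (rule Hc[OF hx(1)])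
      have hc: "h \<in> carrier G" by (rule Hc[OF h(2)])
      have uH: "hx \<otimes>\<^bsub>G\<^esub> h \<otimes>\<^bsub>G\<^esub> inv\<^bsub>G\<^esub> hx \<in> H" using hx(1) h(2) by (intro Hs.m_closed Hs.m_inv_closed)
      have u1: "\<forall>k\<in>J. (hx \<otimes>\<^bsub>G\<^esub> h \<otimes>\<^bsub>G\<^esub> inv\<^bsub>G\<^esub> hx) k = \<one>\<^bsub>Gs k\<^esub>"
      proof
        fix k assume k: "k \<in> J"
        interpret Gk: group "Gs k" using grp kI[OF k] by blast
        show "(hx \<otimes>\<^bsub>G\<^esub> h \<otimes>\<^bsub>G\<^esub> inv\<^bsub>G\<^esub> hx) k = \<one>\<^bsub>Gs k\<^esub>"
          using cconj[OF hxc hc kI[OF k]] h(3) k ccar[OF hxc kI[OF k]] by simp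
      qed
      have "(hx \<otimes>\<^bsub>G\<^esub> h \<otimes>\<^bsub>G\<^esub> inv\<^bsub>G\<^esub> hx) j = x \<otimes>\<^bsub>Gs j\<^esub> a \<otimes>\<^bsub>Gs j\<^esub> inv\<^bsub>Gs j\<^esub> x"
        using cconj[OF hxc hc j] h(1) hx(2) by simp
      thus "x \<otimes>\<^bsub>Gs j\<^esub> a \<otimes>\<^bsub>Gs j\<^esub> inv\<^bsub>Gs j\<^esub> x \<in> A" using Ain[OF uH u1] by simp
    qed
    obtain A' where A': "maximal_normal_subgroup (Gs j) A'" "A \<subseteq> A'"
      using exists_maximal_normal[OF Gj.is_group fin[OF j] nA pA] by blast
    have pA': "A' \<noteq> carrier (Gs j)" using A'(1) unfolding maximal_normal_subgroup_def by blast
    interpret A'g: subgroup A' "Gs j" using A'(1) unfolding maximal_normal_subgroup_def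
      by (blast intro: normal_imp_subgroup)
    have AA: "\<And>h. h \<in> H \<Longrightarrow> \<forall>k\<in>J. h k = \<one>\<^bsub>Gs k\<^esub> \<Longrightarrow> h j \<in> A'"
    proof -
      fix h assume "h \<in> H" "\<forall>k\<in>J. h k = \<one>\<^bsub>Gs k\<^esub>"
      hence "h j \<in> A" unfolding A_def by blast
      thus "h j \<in> A'" using A'(2) by (rule subsetD[rotated])
    qed
    have M1: "maximal_normal_subgroup G {g \<in> carrier G. g j \<in> A'}" by (rule N1_max[OF j A'(1)])
    have M2: "maximal_normal_subgroup G {g \<in> carrier G. \<exists>h\<in>H. (\<forall>k\<in>J. h k = g k) \<and> h j \<in> A'}"
      by (rule N2_max[OF JI j PJ A'(1)]) (rule AA)
    obtain a0 where a0: "a0 \<in> carrier (Gs j)" "a0 \<notin> A'" using pA' A'g.subset by blast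
    define g0 where "g0 = (\<lambda>i\<in>I. if i = j then a0 else \<one>\<^bsub>Gs i\<^esub>)"
    have g0c: "g0 \<in> carrier G" unfolding g0_def carrier_product_group
      using a0(1) monoid.one_closed[OF group.is_monoid[OF grp]] by auto
    hence "g0 \<in> H <#>\<^bsub>G\<^esub> melnikov G" using HM by simp
    then obtain h m where hm: "h \<in> H" "m \<in> melnikov G" "g0 = h \<otimes>\<^bsub>G\<^esub> m" unfolding set_mult_def by blast
    have mc: "m \<in> carrier G" using hm(2) by (rule melC)
    have m1: "m \<in> {g \<in> carrier G. g j \<in> A'}" using hm(2) M1 by (rule melD)
    have m2: "m \<in> {g \<in> carrier G. \<exists>h\<in>H. (\<forall>k\<in>J. h k = g k) \<and> h j \<in> A'}" using hm(2) M2 by (rule melD)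
    from m2 obtain hm' where hm': "hm' \<in> H" "\<forall>k\<in>J. hm' k = m k" "hm' j \<in> A'" by blast
    have hc: "h \<in> carrier G" by (rule Hc[OF hm(1)])
    have hmc: "hm' \<in> carrier G" by (rule Hc[OF hm'(1)])
    have uH: "h \<otimes>\<^bsub>G\<^esub> hm' \<in> H" using hm(1) hm'(1) by (rule Hs.m_closed)
    have "\<forall>k\<in>J. (h \<otimes>\<^bsub>G\<^esub> hm') k = \<one>\<^bsub>Gs k\<^esub>"
    proof
      fix k assume k: "k \<in> J"
      have kj: "k \<noteq> j" using k jJ by blast
      have "(h \<otimes>\<^bsub>G\<^esub> hm') k = h k \<otimes>\<^bsub>Gs k\<^esub> m k" using cmul[OF hc hmc kI[OF k]] hm'(2) k by simp
      also have "\<dots> = g0 k" using cmul[OF hc mc kI[OF k]] hm(3) by simp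
      also have "\<dots> = \<one>\<^bsub>Gs k\<^esub>" unfolding g0_def using kj kI[OF k] by simp
      finally show "(h \<otimes>\<^bsub>G\<^esub> hm') k = \<one>\<^bsub>Gs k\<^esub>" .
    qed
    hence "(h \<otimes>\<^bsub>G\<^esub> hm') j \<in> A'" by (rule AA[OF uH])
    hence u: "h j \<otimes>\<^bsub>Gs j\<^esub> hm' j \<in> A'" using cmul[OF hc hmc j] by simp
    have hjc: "h j \<in> carrier (Gs j)" by (rule ccar[OF hc j])
    have hmjc: "hm' j \<in> carrier (Gs j)" by (rule ccar[OF hmc j])
    have "h j \<otimes>\<^bsub>Gs j\<^esub> hm' j \<otimes>\<^bsub>Gs j\<^esub> inv\<^bsub>Gs j\<^esub> (hm' j) \<in> A'"
      using u A'g.m_inv_closed[OF hm'(3)] by (rule A'g.m_closed)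
    hence hj: "h j \<in> A'" using hjc hmjc by (simp add: Gj.m_assoc)
    have "g0 j = h j \<otimes>\<^bsub>Gs j\<^esub> m j" using cmul[OF hc mc j] hm(3) by simp
    moreover have "g0 j = a0" unfolding g0_def using j by simp
    moreover have "m j \<in> A'" using m1 by blast
    ultimately have "a0 \<in> A'" using hj A'g.m_closed by metis
    thus False using a0(2) by blast
  qed
  show ?thesis
  proof
    fix f assume f: "f \<in> carrier G"
    from PJ f obtain h1 where h1: "h1 \<in> H" "\<forall>k\<in>J. h1 k = f k" by blast
    have h1c: "h1 \<in> carrier G" by (rule Hc[OF h1(1)])
    have cc: "inv\<^bsub>Gs j\<^esub> (h1 j) \<otimes>\<^bsub>Gs j\<^esub> f j \<in> carrier (Gs j)"
      using ccar[OF h1c j] ccar[OF f j] by simp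
    from Afull cc obtain h2 where h2: "h2 \<in> H" "\<forall>k\<in>J. h2 k = \<one>\<^bsub>Gs k\<^esub>"
        "h2 j = inv\<^bsub>Gs j\<^esub> (h1 j) \<otimes>\<^bsub>Gs j\<^esub> f j" by blast
    have h2c: "h2 \<in> carrier G" by (rule Hc[OF h2(1)])
    have "\<forall>k\<in>insert j J. (h1 \<otimes>\<^bsub>G\<^esub> h2) k = f k"
    proof
      fix k assume k: "k \<in> insert j J"
      show "(h1 \<otimes>\<^bsub>G\<^esub> h2) k = f k"
      proof (cases "k = j")
        case True
        thus ?thesis using cmul[OF h1c h2c j] h2(3) ccar[OF h1c j] ccar[OF f j]
          by (simp add: Gj.m_assoc[symmetric])
      next
        case False
        hence kJ: "k \<in> J" using k by blast
        interpret Gk: group "Gs k" using grp kI[OF kJ] by blast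
        show ?thesis using cmul[OF h1c h2c kI[OF kJ]] h1(2) h2(2) kJ ccar[OF f kI[OF kJ]] by simp
      qed
    qed
    thus "\<exists>h\<in>H. \<forall>k\<in>insert j J. h k = f k" using Hs.m_closed[OF h1(1) h2(1)] by blast
  qed
qed

lemma all_J:
  assumes "finite J" "J \<subseteq> I"
  shows "\<forall>f\<in>carrier G. \<exists>h\<in>H. \<forall>k\<in>J. h k = f k"
  using assms
proof (induction J rule: finite_induct)
  case empty
  then show ?case using subgroup.one_closed[OF sub] by blast
next
  case (insert j J)
  show ?case by (rule step) (use insert in auto)
qed

lemma H_full:
  assumes "finite I"
  shows "H = carrier G"
proof
  show "H \<subseteq> carrier G" by (rule HG)
  show "carrier G \<subseteq> H"
  proof
    fix f assume f: "f \<in> carrier G"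
    from all_J[OF assms subset_refl] f obtain h where h: "h \<in> H" "\<forall>k\<in>I. h k = f k" by blast
    have hc: "h \<in> carrier G" using HG h(1) by (rule subsetD)
    have "h = f"
    proof (rule extensionalityI)
      show "h \<in> extensional I" using hc by (simp add: carrier_product_group PiE_def)
      show "f \<in> extensional I" using f by (simp add: carrier_product_group PiE_def)
      show "\<And>x. x \<in> I \<Longrightarrow> h x = f x" using h(2) by blast
    qed
    thus "f \<in> H" using h(1) by simp
  qed
qed

end

theorem mainTheorem14:
  fixes I :: "'i set" and Gs :: "'i \<Rightarrow> ('a, 'b) monoid_scheme" and H :: "('i \<Rightarrow> 'a) set"
  assumes "finite I"
    and "\<And>i. i \<in> I \<Longrightarrow> group (Gs i)"
    and "\<And>i. i \<in> I \<Longrightarrow> finite (carrier (Gs i))"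
    and "subgroup H (product_group I Gs)"
    and "H <#>\<^bsub>product_group I Gs\<^esub> melnikov (product_group I Gs) = carrier (product_group I Gs)"
    and "\<And>i. i \<in> I \<Longrightarrow> (\<lambda>h. h i) ` H = carrier (Gs i)"
  shows "H = carrier (product_group I Gs)"
proof -
  interpret msetup I Gs H by (rule msetup.intro[OF assms(2-6)])
  show ?thesis by (rule H_full[OF assms(1)])
qed

end
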